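(* Let $\mathcal P_2$ be an $\varepsilon$-additive-approximate short path between nodes $u_0$ and $u_1$, and suppose there is a node $v$ on a shortest path between $u_0$ and $u_1$ such that $\min_{v'\in\mathcal P_2}d_{v,v'}\ge\gamma$. Then, with $\delta=\delta_{\mathrm{worst}}(G)$, $$\varepsilon>\frac{2^{\gamma/(6\delta+1)}}{48\delta+\frac{17}{2}}-\log_2(48\delta+8).$$
   Context: $G=(V,E)$ is a finite connected undirected graph with $n\ge 4$ nodes and $d_{u,v}$ denotes the shortest-path distance (number of edges). For any four nodes $w_1,\dots,w_4$, order the three sums $d_{w_1,w_2}+d_{w_3,w_4}$, $d_{w_1,w_3}+d_{w_2,w_4}$, $d_{w_1,w_4}+d_{w_2,w_3}$ as $S\le M\le L$ and set $\delta_{w_1,w_2,w_3,w_4}=(L-M)/2$; $\delta_{\mathrm{worst}}(G)=\max\delta_{w_1,w_2,w_3,w_4}$. A path $(w_0,\dots,w_k)$ is $\varepsilon$-additive-approximate short if its length (number of edges) is at most $d_{w_0,w_k}+\varepsilon$. *)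

theory Defs
  imports Complex_Main
begin

definition is_walk :: "'a set \<Rightarrow> ('a \<Rightarrow> 'a \<Rightarrow> bool) \<Rightarrow> 'a list \<Rightarrow> bool" where
  "is_walk V E p \<longleftrightarrow> p \<noteq> [] \<and> set p \<subseteq> V \<and>
     (\<forall>i. Suc i < length p \<longrightarrow> E (p ! i) (p ! Suc i))"

definition is_path :: "'a set \<Rightarrow> ('a \<Rightarrow> 'a \<Rightarrow> bool) \<Rightarrow> 'a list \<Rightarrow> bool" where
  "is_path V E p \<longleftrightarrow> is_walk V E p \<and> distinct p"

definition plen :: "'a list \<Rightarrow> nat" where
  "plen p = length p - 1"

definition path_between :: "'a set \<Rightarrow> ('a \<Rightarrow> 'a \<Rightarrow> bool) \<Rightarrow> 'a list \<Rightarrow> 'a \<Rightarrow> 'a \<Rightarrow> bool" where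
  "path_between V E p u v \<longleftrightarrow> is_path V E p \<and> hd p = u \<and> last p = v"

definition finite_connected_graph :: "'a set \<Rightarrow> ('a \<Rightarrow> 'a \<Rightarrow> bool) \<Rightarrow> bool" where
  "finite_connected_graph V E \<longleftrightarrow> finite V \<and> V \<noteq> {} \<and>
     (\<forall>x y. E x y \<longrightarrow> x \<in> V \<and> y \<in> V) \<and>
     (\<forall>x y. E x y \<longrightarrow> E y x) \<and> (\<forall>x. \<not> E x x) \<and>
     (\<forall>u\<in>V. \<forall>v\<in>V. \<exists>p. path_between V E p u v)"

definition gdist :: "'a set \<Rightarrow> ('a \<Rightarrow> 'a \<Rightarrow> bool) \<Rightarrow> 'a \<Rightarrow> 'a \<Rightarrow> nat" where
  "gdist V E u v = (LEAST k. \<exists>p. path_between V E p u v \<and> plen p = k)"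

definition shortest_path :: "'a set \<Rightarrow> ('a \<Rightarrow> 'a \<Rightarrow> bool) \<Rightarrow> 'a list \<Rightarrow> 'a \<Rightarrow> 'a \<Rightarrow> bool" where
  "shortest_path V E p u v \<longleftrightarrow> path_between V E p u v \<and> plen p = gdist V E u v"

definition approx_short_path :: "'a set \<Rightarrow> ('a \<Rightarrow> 'a \<Rightarrow> bool) \<Rightarrow> real \<Rightarrow> 'a list \<Rightarrow> 'a \<Rightarrow> 'a \<Rightarrow> bool" where
  "approx_short_path V E \<epsilon> p u v \<longleftrightarrow>
     path_between V E p u v \<and> real (plen p) \<le> real (gdist V E u v) + \<epsilon>"

definition delta4 :: "'a set \<Rightarrow> ('a \<Rightarrow> 'a \<Rightarrow> bool) \<Rightarrow> 'a \<Rightarrow> 'a \<Rightarrow> 'a \<Rightarrow> 'a \<Rightarrow> real" where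
  "delta4 V E w1 w2 w3 w4 =
    (let a = real (gdist V E w1 w2 + gdist V E w3 w4);
         b = real (gdist V E w1 w3 + gdist V E w2 w4);
         c = real (gdist V E w1 w4 + gdist V E w2 w3);
         L = max a (max b c);
         S = min a (min b c);
         M = a + b + c - L - S
     in (L - M) / 2)"

definition delta_worst :: "'a set \<Rightarrow> ('a \<Rightarrow> 'a \<Rightarrow> bool) \<Rightarrow> real" where
  "delta_worst V E = Max {delta4 V E w1 w2 w3 w4 | w1 w2 w3 w4.
      w1 \<in> V \<and> w2 \<in> V \<and> w3 \<in> V \<and> w4 \<in> V}"

end

theory Submission
  imports Defs
begin


lemma numfin:
  fixes \<delta> \<epsilon> \<gamma> :: real and N :: nat
  assumes dp: "\<delta> \<ge> 0" and ep: "\<epsilon> \<ge> 0" and g: "\<gamma> \<le> 2*real N*\<delta> + 7/2" and N: "2^N < 4*max \<epsilon> 1"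
  shows "\<epsilon> > 2 powr (\<gamma>/(6*\<delta>+1))/(48*\<delta>+17/2) - log 2 (48*\<delta>+8)"
proof -
  have "(real N/3 + 7/2)*(6*\<delta>+1) = 2*real N*\<delta> + real N/3 + 21*\<delta> + 7/2" by (simp add: algebra_simps)
  then have "\<gamma> \<le> (real N/3 + 7/2)*(6*\<delta>+1)" using g dp by simp
  then have q: "\<gamma>/(6*\<delta>+1) \<le> real N/3 + 7/2" using dp by (simp add: pos_divide_le_eq)
  define X where "X = 2 powr (real N/3)"
  have Xp: "X > 0" unfolding X_def by simp
  have "2 powr (\<gamma>/(6*\<delta>+1)) \<le> 2 powr (real N/3 + 7/2)" using q by (rule powr_mono) simp
  also have "\<dots> = X * 2 powr (7/2)" unfolding X_def by (simp add: powr_add)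
  also have "\<dots> \<le> X * 16"
  proof -
    have "2 powr (7/2::real) \<le> 2 powr (4::real)" by (rule powr_mono) simp_all
    also have "\<dots> = 16" by simp
    finally show ?thesis using Xp by simp
  qed
  finally have L: "2 powr (\<gamma>/(6*\<delta>+1)) \<le> 16 * X" by simp
  have X3: "X^3 = 2^N"
  proof -
    have "X^3 = 2 powr (real N/3 + real N/3 + real N/3)" unfolding X_def power3_eq_cube powr_add by simp
    also have "\<dots> = 2 powr (real N)" by simp
    finally show ?thesis by (simp add: powr_realpow)
  qed
  have lt: "16 * X < 17/2 * (\<epsilon> + 3)"
  proof (rule ccontr)
    assume "\<not> ?thesis"
    then have "17/32 * (\<epsilon> + 3) \<le> X" by simp
    then have "(17/32 * (\<epsilon> + 3))^3 \<le> X^3" by (rule power_mono) (use ep in simp)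
    moreover have "(17/32 * (\<epsilon> + 3))^3 \<ge> 4 * max \<epsilon> 1"
    proof -
    have eq3: "(17/32 * (\<epsilon> + 3))^3 = 4913/32768 * (\<epsilon>+3)^3" unfolding power_mult_distrib by (simp add: power3_eq_cube)
    show "(17/32 * (\<epsilon> + 3))^3 \<ge> 4 * max \<epsilon> 1"
    proof (cases "\<epsilon> \<le> 1")
      case True
      have "(\<epsilon> + 3)^3 \<ge> 3^3" by (rule power_mono) (use ep in simp_all)
      then show ?thesis using True eq3 by (simp add: max_def)
    next
      case False
      have "(\<epsilon> + 3)^3 = \<epsilon>^3 + 9*\<epsilon>^2 + 27*\<epsilon> + 27" by (simp add: power3_eq_cube power2_eq_square algebra_simps)
      moreover have "\<epsilon>^3 \<ge> 0" "\<epsilon>^2 \<ge> 0" using ep by simp_all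
      ultimately have "(\<epsilon> + 3)^3 \<ge> 27*\<epsilon> + 27" by linarith
      then show ?thesis using False eq3 by (simp add: max_def)
    qed
    qed
    ultimately show False using N X3 by simp
  qed
  have l8: "log 2 (48*\<delta>+8) \<ge> 3"
  proof -
    have "log 2 (8::real) = 3"
    proof -
      have "log 2 ((2::real) powr 3) = 3" by (rule log_powr_cancel) simp_all
      moreover have "(2::real) powr 3 = 8" by simp
      ultimately show ?thesis by simp
    qed
    moreover have "log 2 (8::real) \<le> log 2 (48*\<delta>+8)" by (rule log_mono) (use dp in simp_all)
    ultimately show ?thesis by simp
  qed
  have "17/2 * (\<epsilon> + 3) \<le> (48*\<delta>+17/2) * (\<epsilon> + log 2 (48*\<delta>+8))"
    by (rule mult_mono) (use dp ep l8 in simp_all)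
  then have "2 powr (\<gamma>/(6*\<delta>+1)) < (48*\<delta>+17/2) * (\<epsilon> + log 2 (48*\<delta>+8))" using L lt by simp
  then have "2 powr (\<gamma>/(6*\<delta>+1))/(48*\<delta>+17/2) < \<epsilon> + log 2 (48*\<delta>+8)"
    using dp by (simp add: pos_divide_less_eq mult.commute)
  then show ?thesis by simp
qed


definition gp :: "('a \<Rightarrow> 'a \<Rightarrow> nat) \<Rightarrow> 'a \<Rightarrow> 'a \<Rightarrow> 'a \<Rightarrow> real" where
  "gp d w x y = (real (d w x) + real (d w y) - real (d x y)) / 2"

locale hm =
  fixes V :: "'a set" and d :: "'a \<Rightarrow> 'a \<Rightarrow> nat" and \<delta> :: real
  assumes dsym: "x \<in> V \<Longrightarrow> y \<in> V \<Longrightarrow> d x y = d y x"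
  and dtri: "x \<in> V \<Longrightarrow> y \<in> V \<Longrightarrow> z \<in> V \<Longrightarrow> d x z \<le> d x y + d y z"
  and drefl: "x \<in> V \<Longrightarrow> d x x = 0"
  and fourp: "w\<in>V \<Longrightarrow> x\<in>V \<Longrightarrow> y\<in>V \<Longrightarrow> z\<in>V \<Longrightarrow>
     real (d x z) + real (d w y) \<le> max (real (d x y) + real (d w z)) (real (d y z) + real (d w x)) + 2*\<delta>"
  and dpos: "\<delta> \<ge> 0"
begin

lemma gp4:
  assumes "w\<in>V" "x\<in>V" "y\<in>V" "z\<in>V" shows "gp d w x z \<ge> min (gp d w x y) (gp d w y z) - \<delta>"
proof -
  have "real (d x z) + real (d w y) \<le> max (real (d x y) + real (d w z)) (real (d y z) + real (d w x)) + 2*\<delta>"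
    using fourp assms by blast
  moreover have "2 * gp d w x z = real (d w x) + real (d w z) - real (d x z)"
    "2 * gp d w x y = real (d w x) + real (d w y) - real (d x y)"
    "2 * gp d w y z = real (d w y) + real (d w z) - real (d y z)" unfolding gp_def by simp_all
  ultimately show ?thesis unfolding max_def min_def by (simp split: if_splits; linarith)
qed

lemma gp2: "2 * gp d w x y = real (d w x) + real (d w y) - real (d x y)" unfolding gp_def by simp

lemma gp_nonneg: "w\<in>V \<Longrightarrow> x\<in>V \<Longrightarrow> y\<in>V \<Longrightarrow> gp d w x y \<ge> 0"
  using dtri[of x w y] dsym[of x w] gp2[of w x y] by simp

context
  fixes p :: "nat \<Rightarrow> 'a" and l :: nat and w :: 'a
  assumes adj: "\<forall>i<l. d (p i) (p (Suc i)) \<le> 1" and inV: "\<forall>i\<le>l. p i \<in> V" and wV: "w \<in> V"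
begin

lemma dseq: "i \<le> j \<Longrightarrow> j \<le> l \<Longrightarrow> d (p i) (p j) \<le> j - i"
proof (induction j)
  case 0 then show ?case using drefl inV by simp
next
  case (Suc j)
  show ?case
  proof (cases "i = Suc j")
    case True then show ?thesis using drefl inV Suc by simp
  next
    case False
    then have "i \<le> j" using Suc by simp
    then have "d (p i) (p (Suc j)) \<le> d (p i) (p j) + d (p j) (p (Suc j))"
      using dtri inV Suc by simp
    moreover have "d (p j) (p (Suc j)) \<le> 1" using adj Suc by simp
    moreover have "d (p i) (p j) \<le> j - i" using Suc \<open>i \<le> j\<close> by simp
    ultimately show ?thesis using \<open>i \<le> j\<close> by linarith
  qed
qed

lemma base:
  assumes "a \<le> b" "b \<le> l" "gp d w (p a) (p b) \<le> \<kappa>"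
  shows "\<exists>i. a \<le> i \<and> i \<le> b \<and> 2 * real (d w (p i)) \<le> 4*\<kappa> + 4*\<delta> + 2 + (real b - real a - real (d (p a) (p b)))"
proof -
  have pa: "p a \<in> V" and pb: "p b \<in> V" using inV assms by auto
  have k0: "\<kappa> \<ge> 0" using gp_nonneg[OF wV pa pb] assms by linarith
  have e0: "real (d (p a) (p b)) \<le> real b - real a" using dseq[of a b] assms by simp
  define S where "S = {i. a \<le> i \<and> i \<le> b \<and> gp d w (p a) (p i) \<le> \<kappa> + \<delta>}"
  have "b \<in> S" using assms dpos unfolding S_def by simp
  define i where "i = (LEAST i. i \<in> S)"
  have iS: "i \<in> S" unfolding i_def by (rule LeastI, fact)
  then have ia: "a \<le> i" "i \<le> b" and A: "gp d w (p a) (p i) \<le> \<kappa> + \<delta>" unfolding S_def by auto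
  have pi: "p i \<in> V" using inV ia assms by auto
  show ?thesis
  proof (cases "i = a")
    case True
    then have "real (d w (p a)) \<le> \<kappa> + \<delta>" using A drefl[OF pa] gp2[of w "p a" "p a"] by simp
    then have "2 * real (d w (p a)) \<le> 4*\<kappa> + 4*\<delta> + 2 + (real b - real a - real (d (p a) (p b)))"
      using k0 dpos e0 by linarith
    then show ?thesis using True \<open>a \<le> b\<close> by (intro exI[of _ a]) simp
  next
    case False
    then have i1: "i - 1 \<notin> S" unfolding i_def using ia
      by (metis (no_types, lifting) diff_less i_def le_neq_implies_less less_imp_diff_less
          neq0_conv not_less_Least zero_less_one le_less_trans)
    have ja: "a \<le> i - 1" "i - 1 \<le> b" "Suc (i-1) = i" using False ia by auto
    then have j1: "gp d w (p a) (p (i-1)) > \<kappa> + \<delta>" using i1 unfolding S_def by auto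
    have pj: "p (i-1) \<in> V" using inV ja assms by auto
    have "gp d w (p a) (p b) \<ge> min (gp d w (p a) (p (i-1))) (gp d w (p (i-1)) (p b)) - \<delta>"
      by (rule gp4[OF wV pa pj pb])
    then have B1: "gp d w (p (i-1)) (p b) \<le> \<kappa> + \<delta>" using j1 assms by (auto simp: min_def split: if_splits)
    have il: "i - 1 < l" using ia assms False by linarith
    have adj1: "d (p (i-1)) (p i) \<le> 1" using adj[rule_format, OF il] ja(3) by simp
    have t1: "d w (p i) \<le> d w (p (i-1)) + d (p (i-1)) (p i)" using dtri wV pj pi by blast
    have t2: "d (p (i-1)) (p b) \<le> d (p (i-1)) (p i) + d (p i) (p b)" using dtri pj pi pb by blast
    have s1: "d (p a) (p i) \<le> i - a" using dseq ia assms by simp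
    have s2: "d (p i) (p b) \<le> b - i" using dseq ia assms by simp
    have "2 * real (d w (p i)) \<le> 4*\<kappa> + 4*\<delta> + 2 + (real b - real a - real (d (p a) (p b)))"
      using A B1 adj1 t1 t2 s1 s2 ia gp_nonneg[OF wV pa pb] gp2[of w "p a" "p i"] gp2[of w "p (i-1)" "p b"]
        gp2[of w "p a" "p b"] gp2[of w "p i" "p b"]
      by (simp add: of_nat_diff) linarith
    then show ?thesis using ia by blast
  qed
qed

lemma key:
  "a \<le> b \<Longrightarrow> b \<le> l \<Longrightarrow> gp d w (p a) (p b) \<le> \<kappa> \<Longrightarrow>
   real b - real a - real (d (p a) (p b)) \<le> 4 + \<epsilon> \<Longrightarrow>
   \<exists>i. a \<le> i \<and> i \<le> b \<and> 2 * real (d w (p i)) \<le> 4*\<kappa> + 4*(real k+1)*\<delta> + 6 + \<epsilon> / 2^k"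
proof (induction k arbitrary: a b \<kappa> \<epsilon>)
  case 0
  from base[OF 0(1,2,3)] obtain i where "a \<le> i" "i \<le> b"
    "2 * real (d w (p i)) \<le> 4*\<kappa> + 4*\<delta> + 2 + (real b - real a - real (d (p a) (p b)))" by blast
  then show ?case using 0(4) by (intro exI[of _ i]) simp
next
  case (Suc k)
  have pa: "p a \<in> V" and pb: "p b \<in> V" using inV Suc.prems by auto
  have e0: "real (d (p a) (p b)) \<le> real b - real a" using dseq[of a b] Suc.prems by simp
  have epos: "\<epsilon> \<ge> -4" using e0 Suc.prems(4) by linarith
  define e1 where "e1 i = real i - real a - real (d (p a) (p i))" for i
  define M where "M = {i. a \<le> i \<and> i \<le> b \<and> (i = b \<or> e1 (Suc i) > 2 + \<epsilon>/2)}"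
  have "b \<in> M" using Suc.prems unfolding M_def by simp
  define m where "m = (LEAST i. i \<in> M)"
  have mM: "m \<in> M" unfolding m_def by (rule LeastI, fact)
  then have ma: "a \<le> m" "m \<le> b" unfolding M_def by auto
  have pm: "p m \<in> V" using inV ma Suc.prems by auto
  have E1: "e1 m \<le> 2 + \<epsilon>/2"
  proof (cases "m = a")
    case True then show ?thesis using drefl[OF pa] epos unfolding e1_def by simp
  next
    case False
    have "m - 1 < m" using False ma by simp
    then have "m - 1 \<notin> M" unfolding m_def by (rule not_less_Least)
    moreover have "a \<le> m - 1" "m - 1 \<le> b" "m - 1 \<noteq> b" "Suc (m - 1) = m" using False ma by auto
    ultimately show ?thesis unfolding M_def by auto
  qed
  have E2: "real b - real m - real (d (p m) (p b)) \<le> 4 + \<epsilon>/2"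
  proof (cases "m = b")
    case True then show ?thesis using drefl[OF pb] epos by simp
  next
    case False
    then have gt: "e1 (Suc m) > 2 + \<epsilon>/2" using mM unfolding M_def by auto
    have ml: "m < l" using False ma Suc.prems by linarith
    have psm: "p (Suc m) \<in> V" using inV ml by simp
    have "d (p a) (p m) \<le> d (p a) (p (Suc m)) + d (p (Suc m)) (p m)" using dtri pa pm psm by blast
    moreover have "d (p m) (p (Suc m)) \<le> 1" using adj ml by simp
    moreover have "d (p (Suc m)) (p m) = d (p m) (p (Suc m))" using dsym pm psm by blast
    ultimately have "real (d (p a) (p m)) \<le> real (d (p a) (p (Suc m))) + 1" by linarith
    then have "e1 m > \<epsilon>/2" using gt unfolding e1_def by simp
    moreover have "d (p a) (p b) \<le> d (p a) (p m) + d (p m) (p b)" using dtri pa pm pb by blast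
    ultimately show ?thesis using Suc.prems(4) unfolding e1_def by simp
  qed
  have E1': "real m - real a - real (d (p a) (p m)) \<le> 4 + \<epsilon>/2" using E1 unfolding e1_def by simp
  have eq: "(\<epsilon>/2) / 2^k = \<epsilon> / 2^(Suc k)" by simp
  have "gp d w (p a) (p b) \<ge> min (gp d w (p a) (p m)) (gp d w (p m) (p b)) - \<delta>"
    by (rule gp4[OF wV pa pm pb])
  then have "gp d w (p a) (p m) \<le> \<kappa> + \<delta> \<or> gp d w (p m) (p b) \<le> \<kappa> + \<delta>"
    using Suc.prems(3) by (auto simp: min_def split: if_splits)
  then obtain i where "a \<le> i" "i \<le> b"
    "2 * real (d w (p i)) \<le> 4*(\<kappa>+\<delta>) + 4*(real k+1)*\<delta> + 6 + (\<epsilon>/2) / 2^k"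
  proof
    assume "gp d w (p a) (p m) \<le> \<kappa> + \<delta>"
    from Suc.IH[OF ma(1) _ this E1'] ma Suc.prems(2) obtain i where "a \<le> i" "i \<le> m"
      "2 * real (d w (p i)) \<le> 4*(\<kappa>+\<delta>) + 4*(real k+1)*\<delta> + 6 + (\<epsilon>/2) / 2^k" by auto
    then show ?thesis using ma that[of i] by simp
  next
    assume "gp d w (p m) (p b) \<le> \<kappa> + \<delta>"
    from Suc.IH[OF ma(2) Suc.prems(2) this E2] obtain i where "m \<le> i" "i \<le> b"
      "2 * real (d w (p i)) \<le> 4*(\<kappa>+\<delta>) + 4*(real k+1)*\<delta> + 6 + (\<epsilon>/2) / 2^k" by blast
    then show ?thesis using ma that[of i] by simp
  qed
  then show ?case using eq by (intro exI[of _ i]) (simp add: algebra_simps)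
qed

end
end


context
  fixes V :: "'a set" and E :: "'a \<Rightarrow> 'a \<Rightarrow> bool"
  assumes G: "finite_connected_graph V E"
begin

lemma EV: "E x y \<Longrightarrow> x \<in> V \<and> y \<in> V" using G unfolding finite_connected_graph_def by blast
lemma Esym: "E x y \<Longrightarrow> E y x" using G unfolding finite_connected_graph_def by blast
lemma Eirr: "\<not> E x x" using G unfolding finite_connected_graph_def by blast

lemma path_le: "path_between V E p u v \<Longrightarrow> gdist V E u v \<le> plen p"
  unfolding gdist_def by (rule Least_le) blast

lemma sp_ex: "u \<in> V \<Longrightarrow> v \<in> V \<Longrightarrow> \<exists>p. path_between V E p u v \<and> plen p = gdist V E u v"
proof -
  assume "u \<in> V" "v \<in> V"
  then obtain p where "path_between V E p u v" using G unfolding finite_connected_graph_def by blast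
  then have "\<exists>k p. path_between V E p u v \<and> plen p = k" by blast
  then show ?thesis unfolding gdist_def by (rule LeastI_ex)
qed

lemma gd_refl: "u \<in> V \<Longrightarrow> gdist V E u u = 0"
proof -
  assume "u \<in> V"
  then have "path_between V E [u] u u" unfolding path_between_def is_path_def is_walk_def by simp
  from path_le[OF this] show ?thesis by (simp add: plen_def)
qed

lemma gd_edge: "E x y \<Longrightarrow> gdist V E x y \<le> 1"
proof -
  assume e: "E x y"
  then have "x \<noteq> y" using Eirr by blast
  then have "path_between V E [x,y] x y" using e EV[OF e]
    unfolding path_between_def is_path_def is_walk_def by (auto simp: less_Suc_eq)
  from path_le[OF this] show ?thesis by (simp add: plen_def)
qed

lemma drop_path: "is_path V E q \<Longrightarrow> j < length q \<Longrightarrow> is_path V E (drop j q)"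
  unfolding is_path_def is_walk_def
proof (intro conjI allI impI; (elim conjE)?)
  fix i assume w: "\<forall>i. Suc i < length q \<longrightarrow> E (q ! i) (q ! Suc i)" and i: "Suc i < length (drop j q)"
  have "Suc (j + i) < length q" using i by simp
  from w[rule_format, OF this] show "E (drop j q ! i) (drop j q ! Suc i)" using i by simp
qed (auto dest: in_set_dropD)

lemma take_path: "is_path V E q \<Longrightarrow> j < length q \<Longrightarrow> is_path V E (take (Suc j) q)"
  unfolding is_path_def is_walk_def
  by (auto dest: in_set_takeD simp: nth_take)

lemma walk_tl: "is_walk V E (x # q) \<Longrightarrow> q \<noteq> [] \<Longrightarrow> is_walk V E q \<and> E x (hd q)"
  unfolding is_walk_def
proof (intro conjI allI impI)
  assume a: "x # q \<noteq> [] \<and> set (x # q) \<subseteq> V \<and> (\<forall>i. Suc i < length (x # q) \<longrightarrow> E ((x # q) ! i) ((x # q) ! Suc i))"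
    and q: "q \<noteq> []"
  show "q \<noteq> []" by fact
  show "set q \<subseteq> V" using a by auto
  fix i assume "Suc i < length q"
  then show "E (q ! i) (q ! Suc i)" using a[THEN conjunct2, THEN conjunct2, rule_format, of "Suc i"] by simp
next
  assume a: "x # q \<noteq> [] \<and> set (x # q) \<subseteq> V \<and> (\<forall>i. Suc i < length (x # q) \<longrightarrow> E ((x # q) ! i) ((x # q) ! Suc i))"
    and q: "q \<noteq> []"
  show "E x (hd q)" using a[THEN conjunct2, THEN conjunct2, rule_format, of 0] q by (simp add: hd_conv_nth)
qed

lemma step: "E x y \<Longrightarrow> z \<in> V \<Longrightarrow> gdist V E x z \<le> 1 + gdist V E y z"
proof -
  assume e: "E x y" and z: "z \<in> V"
  obtain q where q: "path_between V E q y z" "plen q = gdist V E y z" using sp_ex[of y z] EV[OF e] z by blast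
  have qne: "q \<noteq> []" using q unfolding path_between_def is_path_def is_walk_def by simp
  show ?thesis
  proof (cases "x \<in> set q")
    case True
    then obtain j where j: "j < length q" "q ! j = x" by (auto simp: in_set_conv_nth)
    have "path_between V E (drop j q) x z" using q j drop_path
      unfolding path_between_def by (simp add: hd_drop_conv_nth)
    from path_le[OF this] have "gdist V E x z \<le> plen (drop j q)" .
    also have "\<dots> \<le> plen q" by (simp add: plen_def)
    finally show ?thesis using q by simp
  next
    case False
    have "is_path V E (x # q)"
    proof -
      have w: "is_walk V E q" "distinct q" "hd q = y" using q unfolding path_between_def is_path_def by auto
      have "\<forall>i. Suc i < length (x # q) \<longrightarrow> E ((x # q) ! i) ((x # q) ! Suc i)"
      proof (intro allI impI)
        fix i assume i: "Suc i < length (x # q)"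
        show "E ((x # q) ! i) ((x # q) ! Suc i)"
        proof (cases i)
          case 0 then show ?thesis using e w qne by (simp add: hd_conv_nth)
        next
          case (Suc i') then show ?thesis using w(1) i unfolding is_walk_def by simp
        qed
      qed
      then show ?thesis using w False EV[OF e] unfolding is_path_def is_walk_def by simp
    qed
    then have "path_between V E (x # q) x z" using q qne unfolding path_between_def by simp
    from path_le[OF this] show ?thesis using q qne by (simp add: plen_def)
  qed
qed

lemma walk_tri: "is_walk V E q \<Longrightarrow> z \<in> V \<Longrightarrow> gdist V E (hd q) z \<le> plen q + gdist V E (last q) z"
proof (induction q)
  case Nil then show ?case by (simp add: is_walk_def)
next
  case (Cons x q)
  show ?case
  proof (cases "q = []")
    case True then show ?thesis by (simp add: plen_def)
  next
    case False
    from walk_tl[OF Cons.prems(1) False] have w: "is_walk V E q" "E x (hd q)" by auto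
    have "gdist V E x z \<le> 1 + gdist V E (hd q) z" by (rule step[OF w(2) Cons.prems(2)])
    also have "\<dots> \<le> 1 + (plen q + gdist V E (last q) z)" using Cons.IH[OF w(1) Cons.prems(2)] by simp
    finally show ?thesis using False by (cases q) (simp_all add: plen_def)
  qed
qed

lemma gd_tri: "x \<in> V \<Longrightarrow> y \<in> V \<Longrightarrow> z \<in> V \<Longrightarrow> gdist V E x z \<le> gdist V E x y + gdist V E y z"
proof -
  assume xyz: "x \<in> V" "y \<in> V" "z \<in> V"
  obtain q where q: "path_between V E q x y" "plen q = gdist V E x y" using sp_ex xyz by blast
  from walk_tri[of q z] q xyz show ?thesis unfolding path_between_def is_path_def by simp
qed

lemma rev_path: "is_path V E q \<Longrightarrow> is_path V E (rev q)"
  unfolding is_path_def is_walk_def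
proof (intro conjI allI impI; (elim conjE)?)
  fix i assume w: "\<forall>i. Suc i < length q \<longrightarrow> E (q ! i) (q ! Suc i)" and i: "Suc i < length (rev q)"
  define j where "j = length q - Suc (Suc i)"
  have j: "Suc j < length q" "length q - Suc i = Suc j" using i unfolding j_def by auto
  have i2: "Suc i < length q" using i by simp
  have r1: "rev q ! i = q ! Suc j" using i2 j(2) by (simp add: rev_nth)
  have r2: "rev q ! Suc i = q ! j" using i2 unfolding j_def by (simp add: rev_nth)
  show "E (rev q ! i) (rev q ! Suc i)" unfolding r1 r2 by (rule Esym[OF w[rule_format, OF j(1)]])
qed auto

lemma gd_sym_le: "x \<in> V \<Longrightarrow> y \<in> V \<Longrightarrow> gdist V E y x \<le> gdist V E x y"
proof -
  assume xy: "x \<in> V" "y \<in> V"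
  obtain q where q: "path_between V E q x y" "plen q = gdist V E x y" using sp_ex xy by blast
  have ne: "q \<noteq> []" using q unfolding path_between_def is_path_def is_walk_def by simp
  have "path_between V E (rev q) y x" using q rev_path ne
    unfolding path_between_def by (simp add: hd_rev last_rev)
  from path_le[OF this] q show ?thesis by (simp add: plen_def)
qed

lemma gd_sym: "x \<in> V \<Longrightarrow> y \<in> V \<Longrightarrow> gdist V E x y = gdist V E y x"
  using gd_sym_le le_antisym by blast

end

lemma delta4_nonneg: "delta4 V E a b c d \<ge> 0"
  unfolding delta4_def Let_def max_def min_def by (simp split: if_splits; linarith)

theorem corollary8:
  fixes V :: "'a set" and E :: "'a \<Rightarrow> 'a \<Rightarrow> bool"
    and u0 u1 v :: 'a and P2 :: "'a list" and \<epsilon> \<gamma> :: real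
  assumes "finite_connected_graph V E"
    and "card V \<ge> 4"
    and "u0 \<in> V" and "u1 \<in> V"
    and "approx_short_path V E \<epsilon> P2 u0 u1"
    and "\<exists>p. shortest_path V E p u0 u1 \<and> v \<in> set p"
    and "\<forall>v'\<in>set P2. real (gdist V E v v') \<ge> \<gamma>"
  shows "\<epsilon> > 2 powr (\<gamma> / (6 * delta_worst V E + 1)) / (48 * delta_worst V E + 17 / 2)
             - log 2 (48 * delta_worst V E + 8)"
proof -
  note G = assms(1)
  define \<delta> where "\<delta> = delta_worst V E"
  define S where "S = {delta4 V E w1 w2 w3 w4 | w1 w2 w3 w4. w1 \<in> V \<and> w2 \<in> V \<and> w3 \<in> V \<and> w4 \<in> V}"
  have finV: "finite V" using G unfolding finite_connected_graph_def by blast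
  have "S \<subseteq> (\<lambda>(a,b,c,d). delta4 V E a b c d) ` (V \<times> V \<times> V \<times> V)" unfolding S_def by force
  moreover have "finite ((\<lambda>(a,b,c,d). delta4 V E a b c d) ` (V \<times> V \<times> V \<times> V))" using finV by simp
  ultimately have finS: "finite S" by (rule finite_subset)
  have dle: "delta4 V E w1 w2 w3 w4 \<le> \<delta>" if "w1 \<in> V" "w2 \<in> V" "w3 \<in> V" "w4 \<in> V" for w1 w2 w3 w4
  proof -
    have "delta4 V E w1 w2 w3 w4 \<in> S" unfolding S_def using that by blast
    then show ?thesis unfolding \<delta>_def delta_worst_def S_def[symmetric] using finS by (rule Max_ge[rotated])
  qed
  have dpos: "\<delta> \<ge> 0" using dle[OF assms(3) assms(3) assms(3) assms(3)] delta4_nonneg[of V E u0 u0 u0 u0] by linarith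
  interpret H: hm V "gdist V E" \<delta>
  proof
    fix x y assume "x \<in> V" "y \<in> V" then show "gdist V E x y = gdist V E y x" using gd_sym[OF G] by blast
  next
    fix x y z assume "x \<in> V" "y \<in> V" "z \<in> V"
    then show "gdist V E x z \<le> gdist V E x y + gdist V E y z" using gd_tri[OF G] by blast
  next
    fix x assume "x \<in> V" then show "gdist V E x x = 0" using gd_refl[OF G] by blast
  next
    show "0 \<le> \<delta>" by (rule dpos)
  next
    fix w x y z assume V4: "w \<in> V" "x \<in> V" "y \<in> V" "z \<in> V"
    define A where "A = real (gdist V E x z) + real (gdist V E w y)"
    define B where "B = real (gdist V E y z) + real (gdist V E w x)"
    define C where "C = real (gdist V E x y) + real (gdist V E w z)"
    have s1: "gdist V E x w = gdist V E w x" "gdist V E z y = gdist V E y z" "gdist V E z w = gdist V E w z"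
      using gd_sym[OF G] V4 by blast+
    have h: "delta4 V E x z w y \<le> \<delta>" using dle V4 by blast
    then have "(max A (max B C) - (A + B + C - max A (max B C) - min A (min B C))) / 2 \<le> \<delta>"
      unfolding delta4_def Let_def A_def B_def C_def s1 by (simp add: add.commute)
    then have "max A (max B C) - (A + B + C - max A (max B C) - min A (min B C)) \<le> 2 * \<delta>" by simp
    then have "A \<le> max C B + 2 * \<delta>" unfolding max_def min_def by (simp split: if_splits; linarith)
    then show "real (gdist V E x z) + real (gdist V E w y)
        \<le> max (real (gdist V E x y) + real (gdist V E w z)) (real (gdist V E y z) + real (gdist V E w x)) + 2 * \<delta>"
      unfolding A_def B_def C_def .
  qed
  have pb: "path_between V E P2 u0 u1" and ex: "real (plen P2) \<le> real (gdist V E u0 u1) + \<epsilon>"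
    using assms(5) unfolding approx_short_path_def by auto
  have P2ne: "P2 \<noteq> []" and P2w: "is_walk V E P2" and P2V: "set P2 \<subseteq> V"
    using pb unfolding path_between_def is_path_def is_walk_def by auto
  define l where "l = plen P2"
  have ll: "length P2 = Suc l" using P2ne unfolding l_def plen_def by (cases P2) auto
  define p where "p i = P2 ! i" for i
  have inV: "\<forall>i\<le>l. p i \<in> V" using P2V ll unfolding p_def by (auto intro: nth_mem)
  have adj: "\<forall>i<l. gdist V E (p i) (p (Suc i)) \<le> 1"
  proof (intro allI impI)
    fix i assume "i < l"
    then have "E (p i) (p (Suc i))" using P2w ll unfolding is_walk_def p_def by simp
    then show "gdist V E (p i) (p (Suc i)) \<le> 1" by (rule gd_edge[OF G])
  qed
  have p0: "p 0 = u0" using pb P2ne unfolding p_def path_between_def by (simp add: hd_conv_nth)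
  have pl: "p l = u1" using pb P2ne ll unfolding p_def path_between_def by (simp add: last_conv_nth)
  obtain q where q: "shortest_path V E q u0 u1" "v \<in> set q" using assms(6) by blast
  have qp: "path_between V E q u0 u1" "plen q = gdist V E u0 u1" using q unfolding shortest_path_def by auto
  have qpath: "is_path V E q" and qne: "q \<noteq> []" using qp unfolding path_between_def is_path_def is_walk_def by auto
  obtain j where j: "j < length q" "q ! j = v" using q(2) by (auto simp: in_set_conv_nth)
  have vV: "v \<in> V" using qpath q(2) unfolding is_path_def is_walk_def by auto
  have "path_between V E (take (Suc j) q) u0 v"
    using take_path[OF G qpath j(1)] qp j qne unfolding path_between_def
    by (simp add: hd_conv_nth last_conv_nth nth_take)
  from path_le[OF G this] have d1: "gdist V E u0 v \<le> j" using j by (simp add: plen_def)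
  have "path_between V E (drop j q) v u1"
    using drop_path[OF G qpath j(1)] qp j qne unfolding path_between_def
    by (simp add: hd_drop_conv_nth)
  from path_le[OF G this] have d2: "gdist V E v u1 \<le> length q - 1 - j" by (simp add: plen_def)
  have d3: "gdist V E u0 u1 = length q - 1" using qp unfolding plen_def by simp
  have "gdist V E v u0 = gdist V E u0 v" using gd_sym[OF G] vV assms(3) by blast
  then have gp0: "gp (gdist V E) v (p 0) (p l) \<le> 0" unfolding p0 pl gp_def using d1 d2 d3 j by simp
  have e0: "gdist V E u0 u1 \<le> plen P2" by (rule path_le[OF G pb])
  then have epos: "\<epsilon> \<ge> 0" using ex by simp
  have exc: "real l - real 0 - real (gdist V E (p 0) (p l)) \<le> 4 + \<epsilon>" using ex p0 pl l_def by simp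
  define m where "m = max \<epsilon> 1"
  have "\<exists>n. m < 2^n" by (rule real_arch_pow) simp
  then have "\<exists>n. m \<le> 2^n" by (meson less_imp_le)
  define n where "n = (LEAST n. m \<le> (2::real)^n)"
  have n1: "m \<le> 2^n" unfolding n_def by (rule LeastI_ex) fact
  have n2: "2^n < 2*m"
  proof (cases n)
    case 0 then show ?thesis unfolding m_def by simp
  next
    case (Suc k)
    then have "\<not> m \<le> 2^k" unfolding n_def using not_less_Least[of k "\<lambda>n. m \<le> (2::real)^n"] Suc n_def by simp
    then show ?thesis using Suc by simp
  qed
  obtain i where i: "0 \<le> i" "i \<le> l"
    "2 * real (gdist V E v (p i)) \<le> 4*0 + 4*(real n+1)*\<delta> + 6 + \<epsilon> / 2^n"
    using H.key[OF adj inV vV le0 order_refl gp0 exc] by blast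
  have h1: "\<epsilon> / 2^n \<le> 1" using n1 unfolding m_def by simp
  have h2: "\<gamma> \<le> real (gdist V E v (p i))" using assms(7) i ll unfolding p_def by (auto intro: nth_mem)
  have h3: "2*real (Suc n)*\<delta> = 2*real n*\<delta> + 2*\<delta>" "4*(real n+1)*\<delta> = 4*real n*\<delta> + 4*\<delta>" by (simp_all add: algebra_simps)
  define t where "t = \<epsilon> / 2^n"
  have i3: "2 * real (gdist V E v (p i)) \<le> 4*real n*\<delta> + 4*\<delta> + 6 + t" using i(3) h3(2) unfolding t_def by simp
  have t1: "t \<le> 1" using h1 unfolding t_def .
  have g: "\<gamma> \<le> 2*real (Suc n)*\<delta> + 7/2" unfolding h3(1) using i3 t1 h2 by linarith
  have N: "2^(Suc n) < 4 * max \<epsilon> 1" using n2 unfolding m_def by simp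
  from numfin[OF dpos epos g N] show ?thesis unfolding \<delta>_def .
qed

end
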